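(* Let $\mathcal N$ be a monotonic max-sum $(\mathrm{Col},\delta)$-GNN with $L$ layers and aggregation parameters $k_1,\dots,k_L$, and let $C_1,\dots,C_L$ be its layer capacities. Let $\mathcal N'$ be the $(\mathrm{Col},\delta)$-GNN obtained from $\mathcal N$ by replacing each $k_\ell$ by $C_\ell$ (i.e. using $\mathrm{maxsum}_{C_\ell}$ as aggregation in layer $\ell$), leaving everything else unchanged. Then $T_{\mathcal N}(D)=T_{\mathcal N'}(D)$ for every $(\mathrm{Col},\delta)$-dataset $D$.
   Context: Graphs and GNNs. For a finite set of colours $\mathrm{Col}$ and $\delta\in\mathbb N$, a $(\mathrm{Col},\delta)$-graph is $G=\langle V,\{E^c\}_{c\in\mathrm{Col}},\lambda\rangle$ where $V$ is a finite set of vertices, $E^c\subseteq V\times V$ for each colour $c$, and $\lambda$ assigns to each $v\in V$ a feature vector $\mathbf v\in\mathbb R^\delta$; it is Boolean if all feature entries are in $\{0,1\}$. A $(\mathrm{Col},\delta)$-GNN $\mathcal N$ with $L\ge 1$ layers consists of dimensions $\delta_0=\delta,\delta_1,\dots,\delta_{L-1},\delta_L=\delta$; real matrices $A_\ell$ and $B_\ell^c$ of size $\delta_\ell\times\delta_{\ell-1}$ and bias vectors $b_\ell\in\mathbb R^{\delta_\ell}$ for $1\le\ell\le L$, $c\in\mathrm{Col}$; aggregation functions $\mathrm{agg}_\ell$ from finite real multisets to $\mathbb R$ (applied componentwise to finite multisets of vectors); an activation function $\sigma:\mathbb R\to\mathbb R$ and a classification function $\mathrm{cls}:\mathbb R\to\{0,1\}$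 (both applied componentwise). Applying $\mathcal N$ to $G$ produces labellings $\lambda_0=\lambda,\lambda_1,\dots,\lambda_L$ where, writing $\mathbf v_\ell$ for the vector of $v$ under $\lambda_\ell$, $\mathbf v_\ell=\sigma\big(A_\ell\mathbf v_{\ell-1}+\sum_{c\in\mathrm{Col}}B_\ell^c\,\mathrm{agg}_\ell(\{\!\{\mathbf u_{\ell-1}\mid (v,u)\in E^c\}\!\})+b_\ell\big)$. The result $\mathcal N(G)$ is the Boolean graph with the same vertices and edges where each $v$ is labelled by $\mathrm{cls}(\mathbf v_L)$. Canonical transformation. The $(\mathrm{Col},\delta)$-signature consists of a binary predicate $E^c$ for each $c\in\mathrm{Col}$ and unary predicates $U_1,\dots,U_\delta$; a $(\mathrm{Col},\delta)$-dataset is a finite set of variable-free atoms (facts) over this signature. Its canonical encoding $\mathrm{enc}(D)$ is the Boolean $(\mathrm{Col},\delta)$-graph with a vertex $v_t$ for each term $t$ occurring in $D$, an edge $(v_t,v_s)\in E^c$ iff $E^c(t,s)\in D$, and feature vectors with $i$-th component $1$ if $U_i(t)\in D$ and $0$ otherwise. The canonical decoding $\mathrm{dec}(G)$ of a Boolean graph whose vertices are of the form $v_t$ contains $E^c(t,s)$ for each edge $(v_t,v_s)\in E^c$ and $U_i(t)$ for each vertex $v_t$ whose $i$-th feature is $1$. Then $T_{\mathcal N}(D)=\mathrm{dec}(\mathcal N(\mathrm{enc}(D)))$. Max-sum aggregation. For $k\in\mathbb N_0\cup\{\infty\}$ and a finite real multiset $S$, let $m=\min(k,|S|)$; $\mathrm{maxsum}_k(S)=0$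 if $m=0$, and otherwise it is the sum of the $m$ largest elements of $S$, counting multiplicities. Monotonic max-sum GNN: a $(\mathrm{Col},\delta)$-GNN such that (i) all entries of every $A_\ell$ and $B_\ell^c$ are nonnegative; (ii) each $\mathrm{agg}_\ell$ is $\mathrm{maxsum}_{k_\ell}$ for some $k_\ell\in\mathbb N_0\cup\{\infty\}$; (iii) $\sigma$ is monotonically increasing, unbounded, and has range $\mathbb R_{\ge0}$; (iv) $\mathrm{cls}$ is a step function with some threshold $t\in\mathbb R$: $\mathrm{cls}(t')=0$ for $t'<t$ and $\mathrm{cls}(t')=1$ for $t'\ge t$. Sets $X_\ell^i$. A $(\mathrm{Col},\ell)$-multiset family $\mathcal Y$ assigns to each $c\in\mathrm{Col}$ a finite multiset $\mathcal Y^c$ of vectors of dimension $\delta_\ell$. For $1\le\ell\le L$, $1\le i\le\delta_\ell$, a vector $\mathbf x$ of dimension $\delta_{\ell-1}$ and a $(\mathrm{Col},\ell-1)$-multiset family $\mathcal Y$, let $\mathrm{Val}_\ell^i(\mathbf x,\mathcal Y)$ be the $i$-th component of $A_\ell\mathbf x+\sum_{c}B_\ell^c\,\mathrm{maxsum}_{k_\ell}(\mathcal Y^c)+b_\ell$. Define $X_0^i=\{0,1\}$ for $1\le i\le\delta_0$, and for $\ell\ge1$ let $X_\ell^i$ be the set of all values $\sigma(\mathrm{Val}_\ell^i(\mathbf x,\mathcal Y))$ where $\mathbf x$ ranges over vectors of dimension $\delta_{\ell-1}$ with $x_j\in X_{\ell-1}^j$ for all $j$, and $\mathcal Y$ ranges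 over $(\mathrm{Col},\ell-1)$-multiset families such that $y_j\in X_{\ell-1}^j$ for all $c$, all $\mathbf y\in\mathcal Y^c$ and all $j$. (Each $X_\ell^i\subseteq\mathbb R_{\ge0}$ and has a least nonzero element whenever it contains a nonzero element.) Capacities. Let $\alpha_L$ be the threshold of $\mathrm{cls}$. For $\ell=L,L-1,\dots,1$ in turn: let $w_\ell$ be the least nonzero entry among all entries of $A_\ell$ and of all $B_\ell^c$, and let $x_\ell$ be the least nonzero number in $\bigcup_i X_{\ell-1}^i$. If $w_\ell$ or $x_\ell$ does not exist, set $C_\ell=C_{\ell-1}=\dots=C_1=0$ and stop. Otherwise let $\beta_\ell$ be the least natural number with $\sigma(\beta_\ell)\ge\alpha_\ell$, let $b_\ell^{\min}$ be the least entry of $b_\ell$, set $C_\ell=\min\big(k_\ell,\lceil(\beta_\ell-b_\ell^{\min})/(w_\ell\cdot x_\ell)\rceil\big)$ and $\alpha_{\ell-1}=(\beta_\ell-b_\ell^{\min})/w_\ell$, and continue with $\ell-1$. The capacity of $\mathcal N$ is $C_{\mathcal N}=\max(C_1,\dots,C_L)$. *)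

theory Defs
  imports Complex_Main "HOL-Library.Multiset" "HOL-Library.Extended_Nat"
begin

definition maxsum :: "enat \<Rightarrow> real multiset \<Rightarrow> real" where
  "maxsum k S = (case k of
      \<infinity> \<Rightarrow> sum_mset S
    | enat n \<Rightarrow> sum_list (take n (rev (sorted_list_of_multiset S))))"

text \<open>A (Col,delta)-graph: vertex set, one edge relation per colour (type 'c, finite),
  feature vectors as functions nat => real, components 0..<delta (component i is the
  (i+1)-th feature of the paper).\<close>
record ('c, 'v) graph =
  verts :: "'v set"
  edges :: "'c \<Rightarrow> ('v \<times> 'v) set"
  label :: "'v \<Rightarrow> nat \<Rightarrow> real"

text \<open>Layer l (1 \<le> l \<le> layers) has matrices A l (dim l x dim (l-1)), B l c, bias l,
  aggregation function agg l; activation act; classification cls (value True = 1).\<close>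
record 'c gnn =
  layers :: nat
  dim :: "nat \<Rightarrow> nat"
  A :: "nat \<Rightarrow> nat \<Rightarrow> nat \<Rightarrow> real"
  B :: "nat \<Rightarrow> 'c \<Rightarrow> nat \<Rightarrow> nat \<Rightarrow> real"
  bias :: "nat \<Rightarrow> nat \<Rightarrow> real"
  agg :: "nat \<Rightarrow> real multiset \<Rightarrow> real"
  act :: "real \<Rightarrow> real"
  cls :: "real \<Rightarrow> bool"

definition is_gnn :: "'c gnn \<Rightarrow> nat \<Rightarrow> bool" where
  "is_gnn N \<delta> \<longleftrightarrow> layers N \<ge> 1 \<and> dim N 0 = \<delta> \<and> dim N (layers N) = \<delta>"

primrec run :: "('c::finite) gnn \<Rightarrow> ('c, 'v) graph \<Rightarrow> nat \<Rightarrow> 'v \<Rightarrow> nat \<Rightarrow> real" where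
  "run N G 0 = label G"
| "run N G (Suc l) = (\<lambda>v i. if i < dim N (Suc l) then
      act N ((\<Sum>j<dim N l. A N (Suc l) i j * run N G l v j)
        + (\<Sum>c\<in>UNIV. \<Sum>j<dim N l. B N (Suc l) c i j *
              agg N (Suc l) (image_mset (\<lambda>u. run N G l u j) (mset_set {u. (v, u) \<in> edges G c})))
        + bias N (Suc l) i)
    else 0)"

definition apply_gnn :: "('c::finite) gnn \<Rightarrow> ('c, 'v) graph \<Rightarrow> ('c, 'v) graph" where
  "apply_gnn N G = \<lparr> verts = verts G, edges = edges G,
     label = (\<lambda>v i. if i < dim N (layers N) \<and> cls N (run N G (layers N) v i) then 1 else 0) \<rparr>"

text \<open>Facts: E^c(t,s) and U_i(t); here Un_at i t with i < delta stands for U_{i+1}(t).\<close>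
datatype ('c, 'a) fact = E_at 'c 'a 'a | Un_at nat 'a

definition is_dataset :: "nat \<Rightarrow> ('c, 'a) fact set \<Rightarrow> bool" where
  "is_dataset \<delta> D \<longleftrightarrow> finite D \<and> (\<forall>i t. Un_at i t \<in> D \<longrightarrow> i < \<delta>)"

definition terms :: "('c, 'a) fact set \<Rightarrow> 'a set" where
  "terms D = {t. \<exists>c s. E_at c t s \<in> D \<or> E_at c s t \<in> D} \<union> {t. \<exists>i. Un_at i t \<in> D}"

text \<open>Vertex v_t is identified with the term t.\<close>
definition enc :: "nat \<Rightarrow> ('c, 'a) fact set \<Rightarrow> ('c, 'a) graph" where
  "enc \<delta> D = \<lparr> verts = terms D, edges = (\<lambda>c. {(t, s). E_at c t s \<in> D}),
     label = (\<lambda>t i. if i < \<delta> \<and> Un_at i t \<in> D then 1 else 0) \<rparr>"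

definition dec :: "nat \<Rightarrow> ('c, 'a) graph \<Rightarrow> ('c, 'a) fact set" where
  "dec \<delta> G = {E_at c t s | c t s. (t, s) \<in> edges G c}
     \<union> {Un_at i t | i t. t \<in> verts G \<and> i < \<delta> \<and> label G t i = 1}"

definition T :: "('c::finite) gnn \<Rightarrow> nat \<Rightarrow> ('c, 'a) fact set \<Rightarrow> ('c, 'a) fact set" where
  "T N \<delta> D = dec \<delta> (apply_gnn N (enc \<delta> D))"

definition monotonic_maxsum :: "('c::finite) gnn \<Rightarrow> nat \<Rightarrow> (nat \<Rightarrow> enat) \<Rightarrow> real \<Rightarrow> bool" where
  "monotonic_maxsum N \<delta> k t \<longleftrightarrow> is_gnn N \<delta>
     \<and> (\<forall>l\<in>{1..layers N}. \<forall>i<dim N l. \<forall>j<dim N (l - 1).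
          A N l i j \<ge> 0 \<and> (\<forall>c. B N l c i j \<ge> 0))
     \<and> (\<forall>l\<in>{1..layers N}. agg N l = maxsum (k l))
     \<and> mono (act N) \<and> \<not> bdd_above (range (act N)) \<and> range (act N) = {0..}
     \<and> (\<forall>x. cls N x \<longleftrightarrow> x \<ge> t)"

definition Val :: "('c::finite) gnn \<Rightarrow> (nat \<Rightarrow> enat) \<Rightarrow> nat \<Rightarrow> nat \<Rightarrow> (nat \<Rightarrow> real)
    \<Rightarrow> ('c \<Rightarrow> (nat \<Rightarrow> real) multiset) \<Rightarrow> real" where
  "Val N k l i x Y = (\<Sum>j<dim N (l - 1). A N l i j * x j)
     + (\<Sum>c\<in>UNIV. \<Sum>j<dim N (l - 1). B N l c i j * maxsum (k l) (image_mset (\<lambda>y. y j) (Y c)))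
     + bias N l i"

primrec Xset :: "('c::finite) gnn \<Rightarrow> (nat \<Rightarrow> enat) \<Rightarrow> nat \<Rightarrow> nat \<Rightarrow> real set" where
  "Xset N k 0 i = {0, 1}"
| "Xset N k (Suc l) i = {act N (Val N k (Suc l) i x Y) | x Y.
      (\<forall>j<dim N l. x j \<in> Xset N k l j)
    \<and> (\<forall>c y j. y \<in># Y c \<and> j < dim N l \<longrightarrow> y j \<in> Xset N k l j)}"

definition has_lnz :: "real set \<Rightarrow> bool" where
  "has_lnz S \<longleftrightarrow> (\<exists>x\<in>S - {0}. \<forall>y\<in>S - {0}. x \<le> y)"

definition lnz :: "real set \<Rightarrow> real" where
  "lnz S = (THE x. x \<in> S - {0} \<and> (\<forall>y\<in>S - {0}. x \<le> y))"

definition weights :: "('c::finite) gnn \<Rightarrow> nat \<Rightarrow> real set" where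
  "weights N l = {A N l i j | i j. i < dim N l \<and> j < dim N (l - 1)}
     \<union> {B N l c i j | c i j. i < dim N l \<and> j < dim N (l - 1)}"

definition xs_set :: "('c::finite) gnn \<Rightarrow> (nat \<Rightarrow> enat) \<Rightarrow> nat \<Rightarrow> real set" where
  "xs_set N k l = (\<Union>i<dim N (l - 1). Xset N k (l - 1) i)"

definition cap_ok :: "('c::finite) gnn \<Rightarrow> (nat \<Rightarrow> enat) \<Rightarrow> nat \<Rightarrow> bool" where
  "cap_ok N k l \<longleftrightarrow> has_lnz (weights N l) \<and> has_lnz (xs_set N k l)"

definition beta :: "('c::finite) gnn \<Rightarrow> real \<Rightarrow> nat" where
  "beta N \<alpha> = (LEAST n::nat. act N (real n) \<ge> \<alpha>)"

definition bmin :: "('c::finite) gnn \<Rightarrow> nat \<Rightarrow> real" where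
  "bmin N l = Min {bias N l i | i. i < dim N l}"

text \<open>alpha_step N k t m = alpha_{L-m} (None once the procedure has stopped).\<close>
primrec alpha_step :: "('c::finite) gnn \<Rightarrow> (nat \<Rightarrow> enat) \<Rightarrow> real \<Rightarrow> nat \<Rightarrow> real option" where
  "alpha_step N k t 0 = Some t"
| "alpha_step N k t (Suc m) = (case alpha_step N k t m of
      None \<Rightarrow> None
    | Some a \<Rightarrow> (let l = layers N - m in
        if cap_ok N k l then Some ((real (beta N a) - bmin N l) / lnz (weights N l)) else None))"

text \<open>C_l for 1 \<le> l \<le> L (a negative ceiling is read as 0).\<close>
definition cap :: "('c::finite) gnn \<Rightarrow> (nat \<Rightarrow> enat) \<Rightarrow> real \<Rightarrow> nat \<Rightarrow> enat" where
  "cap N k t l = (case alpha_step N k t (layers N - l) of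
      None \<Rightarrow> 0
    | Some a \<Rightarrow> (if cap_ok N k l then
        min (k l) (enat (nat \<lceil>(real (beta N a) - bmin N l) / (lnz (weights N l) * lnz (xs_set N k l))\<rceil>))
       else 0))"

end

theory Submission
  imports Defs
begin

lemma desc_split:
  fixes xs :: "real list"
  assumes "sorted_wrt (\<ge>) xs" "\<forall>x\<in>set xs. 0 \<le> x"
  shows "xs = filter (\<lambda>y. y \<noteq> 0) xs @ filter (\<lambda>y. y = 0) xs"
  using assms
proof (induction xs)
  case Nil then show ?case by simp
next
  case (Cons a xs)
  show ?case
  proof (cases "a = 0")
    case True
    then have "\<forall>x\<in>set xs. x = 0" using Cons.prems by force
    then have "filter (\<lambda>y. y \<noteq> 0) xs = []" "filter (\<lambda>y. y = 0) xs = xs"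
      by (auto simp: filter_empty_conv)
    then show ?thesis using True by simp
  next
    case False
    then show ?thesis using Cons by simp
  qed
qed

lemma sum_list_0_if: "\<forall>x\<in>set l. x = (0::real) \<Longrightarrow> sum_list l = 0"
  by (induction l) auto

lemma maxsum_P:
  assumes "\<forall>y\<in>#Y. 0 \<le> y"
  shows "\<exists>P. mset P = filter_mset (\<lambda>y. y \<noteq> 0) Y \<and> sorted_wrt (\<ge>) P \<and> (\<forall>q\<in>set P. 0 < q)
     \<and> (\<forall>n. maxsum (enat n) Y = sum_list (take n P)) \<and> maxsum \<infinity> Y = sum_list P"
proof -
  define xs where "xs = rev (sorted_list_of_multiset Y)"
  have s: "sorted_wrt (\<ge>) xs" unfolding xs_def sorted_wrt_rev
    using sorted_sorted_list_of_multiset[of Y] by simp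
  have nn: "\<forall>x\<in>set xs. 0 \<le> x" using assms by (simp add: xs_def)
  define P where "P = filter (\<lambda>y. y \<noteq> 0) xs"
  define Z where "Z = filter (\<lambda>y. y = 0) xs"
  have split: "xs = P @ Z" using desc_split[OF s nn] by (simp add: P_def Z_def)
  have Z0: "sum_list (take m Z) = 0" for m
  proof -
    have "\<forall>x\<in>set (take m Z). x = 0" using set_take_subset[of m Z] by (auto simp: Z_def)
    then show ?thesis by (metis sum_list_0_if)
  qed
  have "mset xs = Y" by (simp add: xs_def)
  then have m: "mset P = filter_mset (\<lambda>y. y \<noteq> 0) Y" by (simp add: P_def)
  have sP: "sorted_wrt (\<ge>) P" using s by (simp add: P_def sorted_wrt_filter)
  have pos: "\<forall>q\<in>set P. 0 < q" using nn by (auto simp: P_def)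
  have "maxsum (enat n) Y = sum_list (take n P)" for n
    using Z0[of "n - length P"] by (simp add: maxsum_def xs_def[symmetric] split take_append)
  moreover have "maxsum \<infinity> Y = sum_list P"
  proof -
    have "sum_mset Y = sum_list xs" using \<open>mset xs = Y\<close> by (metis sum_mset_sum_list)
    then show ?thesis using Z0[of "length Z"] split by (simp add: maxsum_def)
  qed
  ultimately show ?thesis using m sP pos by blast
qed

lemma sum_list_take_mono:
  fixes P :: "real list" assumes "\<forall>q\<in>set P. 0 \<le> q" "m \<le> n"
  shows "sum_list (take m P) \<le> sum_list (take n P)"
proof -
  have "take n P = take m P @ take (n - m) (drop m P)"
    using assms(2) by (metis le_add_diff_inverse take_add)
  moreover have "0 \<le> sum_list (take (n - m) (drop m P))"
    using assms(1) by (meson in_set_dropD in_set_takeD sum_list_nonneg)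
  ultimately show ?thesis by simp
qed

lemma sum_list_take_le:
  fixes P :: "real list" assumes "\<forall>q\<in>set P. 0 \<le> q"
  shows "sum_list (take m P) \<le> sum_list P"
proof -
  have "0 \<le> sum_list (drop m P)" using assms by (meson in_set_dropD sum_list_nonneg)
  then show ?thesis by (metis append_take_drop_id le_add_same_cancel1 sum_list_append)
qed

lemma sum_list_lower:
  fixes P :: "real list" assumes "\<forall>q\<in>set P. x \<le> q"
  shows "real (length P) * x \<le> sum_list P"
  using assms by (induction P) (auto simp: algebra_simps)

lemma ms_nonneg:
  assumes "\<forall>y\<in>#Y. 0 \<le> y" shows "0 \<le> maxsum k Y"
proof -
  obtain P where P: "\<forall>q\<in>set P. 0 < q" "\<forall>n. maxsum (enat n) Y = sum_list (take n P)"
    "maxsum \<infinity> Y = sum_list P" using maxsum_P[OF assms] by blast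
  show ?thesis
  proof (cases k)
    case (enat n) then show ?thesis using P
      by (metis in_set_takeD less_eq_real_def sum_list_nonneg)
  next
    case infinity then show ?thesis using P by (metis less_eq_real_def sum_list_nonneg)
  qed
qed

lemma ms_mono:
  assumes "\<forall>y\<in>#Y. 0 \<le> y" "C \<le> k" shows "maxsum C Y \<le> maxsum k Y"
proof -
  obtain P where P: "\<forall>q\<in>set P. 0 < q" "\<forall>n. maxsum (enat n) Y = sum_list (take n P)"
    "maxsum \<infinity> Y = sum_list P" using maxsum_P[OF assms(1)] by blast
  have P0: "\<forall>q\<in>set P. 0 \<le> q" using P(1) by auto
  show ?thesis
  proof (cases C)
    case (enat m)
    show ?thesis
    proof (cases k)
      case (enat n)
      have "m \<le> n" using assms(2) enat \<open>C = enat m\<close> by simp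
      then show ?thesis using P(2) sum_list_take_mono[OF P0 \<open>m \<le> n\<close>] enat \<open>C = enat m\<close> by simp
    next
      case infinity then show ?thesis using P(2,3) sum_list_take_le[OF P0] \<open>C = enat m\<close> by simp
    qed
  next
    case infinity then show ?thesis using assms(2) by simp
  qed
qed

lemma ms_ge_elem:
  assumes "\<forall>y\<in>#Y. 0 \<le> y" "k \<noteq> 0" "y \<in># Y" shows "y \<le> maxsum k Y"
proof (cases "y = 0")
  case True then show ?thesis using ms_nonneg[OF assms(1)] by simp
next
  case False
  obtain P where P: "mset P = filter_mset (\<lambda>y. y \<noteq> 0) Y" "sorted_wrt (\<ge>) P"
    "\<forall>q\<in>set P. 0 < q" "\<forall>n. maxsum (enat n) Y = sum_list (take n P)"
    "maxsum \<infinity> Y = sum_list P" using maxsum_P[OF assms(1)] by blast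
  have "y \<in># mset P" unfolding P(1) using False assms(3) by simp
  then have "y \<in> set P" by simp
  then obtain a P' where aP: "P = a # P'" by (cases P) auto
  have ya: "y \<le> a" using P(2) \<open>y \<in> set P\<close> aP by auto
  have P'0: "0 \<le> sum_list (take m P')" for m using P(3) aP
    by (metis in_set_takeD less_eq_real_def list.set_intros(2) sum_list_nonneg)
  have "a \<le> maxsum k Y"
  proof (cases k)
    case (enat n)
    then have "n \<noteq> 0" using assms(2) by (metis enat_0)
    then obtain m where "n = Suc m" using not0_implies_Suc by blast
    then show ?thesis using P(4) P'0[of m] aP enat by simp
  next
    case infinity
    have "0 \<le> sum_list P'" using P'0[of "length P'"] by simp
    then show ?thesis using P(5) aP infinity by simp
  qed
  then show ?thesis using ya by simp
qed

lemma ms_count_ge: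
  assumes "\<forall>y\<in>#Y. 0 \<le> y" "n \<le> size (filter_mset (\<lambda>y. y \<noteq> 0) Y)"
    "\<forall>y\<in>#Y. y \<noteq> 0 \<longrightarrow> x \<le> y"
  shows "real n * x \<le> maxsum (enat n) Y"
proof -
  obtain P where P: "mset P = filter_mset (\<lambda>y. y \<noteq> 0) Y"
    "\<forall>n. maxsum (enat n) Y = sum_list (take n P)" using maxsum_P[OF assms(1)] by blast
  have "length P \<ge> n" using assms(2) arg_cong[OF P(1), of size] by simp
  then have l: "length (take n P) = n" by simp
  have "\<forall>q\<in>set (take n P). x \<le> q"
  proof
    fix q assume "q \<in> set (take n P)"
    then have "q \<in># mset P" by (meson in_set_takeD in_multiset_in_set)
    then have "q \<in># Y" "q \<noteq> 0" unfolding P(1) by auto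
    then show "x \<le> q" using assms(3) by blast
  qed
  then show ?thesis using sum_list_lower[of "take n P" x] l P(2) by simp
qed

lemma ms_count_lt:
  assumes "\<forall>y\<in>#Y. 0 \<le> y" "size (filter_mset (\<lambda>y. y \<noteq> 0) Y) < n" "enat n \<le> k"
  shows "maxsum (enat n) Y = maxsum k Y"
proof -
  obtain P where P: "mset P = filter_mset (\<lambda>y. y \<noteq> 0) Y"
    "\<forall>n. maxsum (enat n) Y = sum_list (take n P)"
    "maxsum \<infinity> Y = sum_list P" using maxsum_P[OF assms(1)] by blast
  have "length P < n" using assms(2) arg_cong[OF P(1), of size] by simp
  then show ?thesis
  proof (cases k)
    case (enat m) then show ?thesis using P \<open>length P < n\<close> assms(3) by simp
  next
    case infinity then show ?thesis using P \<open>length P < n\<close> by simp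
  qed
qed

lemma ms_zero_k: "maxsum 0 Y = 0"
  by (simp add: maxsum_def zero_enat_def)

lemma ms_empty: "maxsum k {#} = 0"
  by (simp add: maxsum_def split: enat.splits)

lemma ms_allzero:
  assumes "\<forall>y\<in>#Y. y = 0" shows "maxsum k Y = 0"
proof -
  obtain P where P: "mset P = filter_mset (\<lambda>y. y \<noteq> 0) Y"
    "\<forall>n. maxsum (enat n) Y = sum_list (take n P)"
    "maxsum \<infinity> Y = sum_list P" using maxsum_P[of Y] assms by (metis order_refl)
  have "filter_mset (\<lambda>y. y \<noteq> 0) Y = {#}" using assms by (simp add: filter_mset_eq_mempty_iff)
  then have "mset P = {#}" using P(1) by simp
  then have "P = []" by simp
  then show ?thesis using P by (cases k) auto
qed



lemma lnz_prop:
  assumes "has_lnz S" shows "lnz S \<in> S - {0}" "\<forall>y\<in>S - {0}. lnz S \<le> y"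
proof -
  obtain x where x: "x \<in> S - {0}" "\<forall>y\<in>S - {0}. x \<le> y" using assms unfolding has_lnz_def by blast
  have "lnz S = x" unfolding lnz_def
    by (rule the_equality) (use x in \<open>auto intro: antisym\<close>)
  then show "lnz S \<in> S - {0}" "\<forall>y\<in>S - {0}. lnz S \<le> y" using x by auto
qed

lemma has_lnz_disc:
  fixes S :: "real set"
  assumes "\<forall>M. finite {x\<in>S. x \<le> M}" "S - {0} \<noteq> {}" shows "has_lnz S"
proof -
  obtain s0 where s0: "s0 \<in> S - {0}" using assms(2) by blast
  define F where "F = {x\<in>S - {0}. x \<le> s0}"
  have fF: "finite F" unfolding F_def by (rule finite_subset[OF _ assms(1)[rule_format, of s0]]) auto
  have "s0 \<in> F" using s0 by (simp add: F_def)
  then have ne: "F \<noteq> {}" by blast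
  have "Min F \<in> S - {0}" using Min_in[OF fF ne] by (simp add: F_def)
  moreover have "\<forall>y\<in>S - {0}. Min F \<le> y"
  proof
    fix y assume y: "y \<in> S - {0}"
    show "Min F \<le> y"
    proof (cases "y \<le> s0")
      case True then have "y \<in> F" using y by (simp add: F_def)
      then show ?thesis using fF by simp
    next
      case False then show ?thesis using Min_le[OF fF \<open>s0 \<in> F\<close>] by simp
    qed
  qed
  ultimately show ?thesis unfolding has_lnz_def by blast
qed

lemma has_lnz_finite:
  fixes S :: "real set"
  assumes "finite S" "S - {0} \<noteq> {}" shows "has_lnz S"
  using has_lnz_disc assms by (metis (no_types, lifting) finite_subset mem_Collect_eq subsetI)

lemma fin_sums:
  fixes F :: "'i \<Rightarrow> real set"
  assumes "finite I" "\<forall>i\<in>I. finite (F i)"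
  shows "finite {\<Sum>i\<in>I. f i | f. \<forall>i\<in>I. f i \<in> F i}"
  using assms
proof (induction I rule: finite_induct)
  case empty then show ?case by simp
next
  case (insert x I)
  let ?S = "{\<Sum>i\<in>I. f i | f. \<forall>i\<in>I. f i \<in> F i}"
  have "{\<Sum>i\<in>insert x I. f i | f. \<forall>i\<in>insert x I. f i \<in> F i} \<subseteq> (\<lambda>(a, b). a + b) ` (F x \<times> ?S)"
  proof
    fix v assume "v \<in> {\<Sum>i\<in>insert x I. f i | f. \<forall>i\<in>insert x I. f i \<in> F i}"
    then obtain f where f: "v = (\<Sum>i\<in>insert x I. f i)" "\<forall>i\<in>insert x I. f i \<in> F i" by blast
    have "v = f x + (\<Sum>i\<in>I. f i)" using f(1) insert.hyps by simp
    moreover have "(\<Sum>i\<in>I. f i) \<in> ?S" using f(2) by blast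
    ultimately show "v \<in> (\<lambda>(a, b). a + b) ` (F x \<times> ?S)" using f(2) by force
  qed
  moreover have "finite (F x \<times> ?S)" using insert by simp
  ultimately show ?case by (meson finite_imageI finite_subset)
qed

lemma fin_ms:
  fixes X :: "real set"
  assumes "\<forall>M. finite {x\<in>X. x \<le> M}" "\<forall>x\<in>X. 0 \<le> x"
  shows "finite {maxsum kk S | S. set_mset S \<subseteq> X \<and> maxsum kk S < R}"
proof -
  define F where "F = {x\<in>X. 0 < x \<and> x \<le> R}"
  have fF: "finite F" unfolding F_def by (rule finite_subset[OF _ assms(1)[rule_format, of R]]) auto
  define nb where "nb = (if F = {} then 0 else nat \<lceil>R / Min F\<rceil>)"
  define Qs where "Qs = {Q. set Q \<subseteq> F \<and> length Q \<le> nb}"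
  have fQ: "finite Qs" unfolding Qs_def using finite_lists_length_le[OF fF] by simp
  have key: "Q \<in> Qs" if Q: "set Q \<subseteq> X" "\<forall>q\<in>set Q. 0 < q" "sum_list Q < R" for Q
  proof -
    have nnQ: "\<forall>q\<in>set Q. 0 \<le> q" using Q(2) by auto
    have sF: "set Q \<subseteq> F"
    proof
      fix q assume q: "q \<in> set Q"
      have "q \<le> sum_list Q" using member_le_sum_list[OF q] nnQ by (metis sum_list_nonneg in_set_remove1 member_le_sum_list)
      then show "q \<in> F" using Q q by (auto simp: F_def)
    qed
    have "length Q \<le> nb"
    proof (cases "Q = []")
      case True then show ?thesis by simp
    next
      case False
      then have Fne: "F \<noteq> {}" using sF by (metis set_empty subset_empty)
      have m0: "0 < Min F" using Min_in[OF fF Fne] by (simp add: F_def)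
      have "\<forall>q\<in>set Q. Min F \<le> q" using sF fF by auto
      then have "real (length Q) * Min F \<le> sum_list Q" by (rule sum_list_lower)
      then have "real (length Q) * Min F < R" using Q(3) by simp
      then have "real (length Q) < R / Min F" using m0 by (simp add: field_simps)
      then have "real (length Q) \<le> real (nat \<lceil>R / Min F\<rceil>)" by linarith
      then show ?thesis using Fne by (simp add: nb_def)
    qed
    then show ?thesis using sF by (simp add: Qs_def)
  qed
  have "{maxsum kk S | S. set_mset S \<subseteq> X \<and> maxsum kk S < R} \<subseteq> sum_list ` Qs"
  proof
    fix v assume "v \<in> {maxsum kk S | S. set_mset S \<subseteq> X \<and> maxsum kk S < R}"
    then obtain S where S: "v = maxsum kk S" "set_mset S \<subseteq> X" "maxsum kk S < R" by blast
    have nn: "\<forall>y\<in>#S. 0 \<le> y" using S(2) assms(2) by auto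
    obtain P where P: "mset P = filter_mset (\<lambda>y. y \<noteq> 0) S" "\<forall>q\<in>set P. 0 < q"
      "\<forall>n. maxsum (enat n) S = sum_list (take n P)" "maxsum \<infinity> S = sum_list P"
      using maxsum_P[OF nn] by blast
    have PX: "set P \<subseteq> X"
    proof
      fix q assume "q \<in> set P"
      then have "q \<in># mset P" by simp
      then have "q \<in># S" unfolding P(1) by simp
      then show "q \<in> X" using S(2) by auto
    qed
    obtain Q where Q: "v = sum_list Q" "set Q \<subseteq> set P"
    proof (cases kk)
      case (enat n) then show ?thesis using that[of "take n P"] S(1) P(3) by (simp add: set_take_subset)
    next
      case infinity then show ?thesis using that[of P] S(1) P(4) by simp
    qed
    have "Q \<in> Qs" using key[of Q] Q PX P(2) S(1,3) by auto
    then show "v \<in> sum_list ` Qs" using Q(1) by blast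
  qed
  then show ?thesis using fQ finite_surj by blast
qed



definition labels01 :: "('c, 'v) graph \<Rightarrow> bool" where
  "labels01 G \<longleftrightarrow> (\<forall>u j. label G u j = 0 \<or> label G u j = 1)"

locale ctx =
  fixes N :: "('c::finite) gnn" and \<delta> :: nat and k :: "nat \<Rightarrow> enat" and t :: real
  assumes mm: "monotonic_maxsum N \<delta> k t"
begin

abbreviation "L \<equiv> layers N"
abbreviation "N' \<equiv> N\<lparr>agg := (\<lambda>l. maxsum (cap N k t l))\<rparr>"

lemma A_nn: "l \<in> {1..L} \<Longrightarrow> i < dim N l \<Longrightarrow> j < dim N (l-1) \<Longrightarrow> 0 \<le> A N l i j"
  using mm by (auto simp: monotonic_maxsum_def)
lemma B_nn: "l \<in> {1..L} \<Longrightarrow> i < dim N l \<Longrightarrow> j < dim N (l-1) \<Longrightarrow> 0 \<le> B N l c i j"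
  using mm by (auto simp: monotonic_maxsum_def)
lemma agg_N: "l \<in> {1..L} \<Longrightarrow> agg N l = maxsum (k l)"
  using mm by (auto simp: monotonic_maxsum_def)
lemma act_mono: "x \<le> y \<Longrightarrow> act N x \<le> act N y"
  using mm by (auto simp: monotonic_maxsum_def mono_def)
lemma act_nn: "0 \<le> act N x"
proof -
  have "act N x \<in> range (act N)" by simp
  then show ?thesis using mm by (auto simp: monotonic_maxsum_def)
qed
lemma act_unb: "\<exists>y. M < act N y"
  using mm unfolding monotonic_maxsum_def bdd_above_def by (auto simp: not_le)
lemma cls_iff: "cls N x \<longleftrightarrow> t \<le> x"
  using mm by (auto simp: monotonic_maxsum_def)
lemma isg: "dim N L = \<delta>" "1 \<le> L"
  using mm by (auto simp: monotonic_maxsum_def is_gnn_def)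

lemma Xset_nn: "x \<in> Xset N k m i \<Longrightarrow> 0 \<le> x"
  by (cases m) (auto simp: act_nn)

lemma run_nn:
  assumes "\<forall>x. 0 \<le> act M x" "labels01 G" shows "0 \<le> run M G l u j"
  using assms by (induction l arbitrary: u j) (auto simp: labels01_def, metis order_refl zero_le_one)

lemma run_X:
  assumes "labels01 G" shows "l \<le> L \<Longrightarrow> j < dim N l \<Longrightarrow> run N G l u j \<in> Xset N k l j"
proof (induction l arbitrary: u j)
  case 0 then show ?case using assms by (auto simp: labels01_def)
next
  case (Suc p)
  define Y where "Y = (\<lambda>c. image_mset (run N G p) (mset_set {u'. (u, u') \<in> edges G c}))"
  have Yj: "image_mset (\<lambda>y. y j') (Y c) = image_mset (\<lambda>u'. run N G p u' j') (mset_set {u'. (u, u') \<in> edges G c})" for c j'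
    by (simp add: Y_def multiset.map_comp o_def)
  have ag: "agg N (Suc p) = maxsum (k (Suc p))" using agg_N Suc.prems by simp
  have "run N G (Suc p) u j = act N (Val N k (Suc p) j (run N G p u) Y)"
    using Suc.prems by (simp add: Val_def Yj ag)
  moreover have "\<forall>j'<dim N p. run N G p u j' \<in> Xset N k p j'" using Suc by simp
  moreover have "\<forall>c y j'. y \<in># Y c \<and> j' < dim N p \<longrightarrow> y j' \<in> Xset N k p j'"
    using Suc by (auto simp: Y_def)
  ultimately show ?case by auto
qed

lemma run'_X:
  assumes "labels01 G" 
  shows "l \<le> L \<Longrightarrow> (\<forall>l'. 1 \<le> l' \<and> l' \<le> l \<longrightarrow> cap N k t l' = 0) \<Longrightarrow> j < dim N l
     \<Longrightarrow> run N' G l u j \<in> Xset N k l j"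
proof (induction l arbitrary: u j)
  case 0 then show ?case using assms by (auto simp: labels01_def)
next
  case (Suc p)
  define Y :: "'c \<Rightarrow> (nat \<Rightarrow> real) multiset" where "Y = (\<lambda>c. {#})"
  have "cap N k t (Suc p) = 0" using Suc.prems by simp
  then have "run N' G (Suc p) u j = act N (Val N k (Suc p) j (run N' G p u) Y)"
    using Suc.prems by (simp add: Val_def Y_def ms_empty ms_zero_k)
  moreover have "\<forall>j'<dim N p. run N' G p u j' \<in> Xset N k p j'" using Suc by simp
  moreover have "\<forall>c y j'. y \<in># Y c \<and> j' < dim N p \<longrightarrow> y j' \<in> Xset N k p j'"
    by (auto simp: Y_def)
  ultimately show ?case by auto
qed

end


context ctx begin

lemma Xset_fin: "m \<le> L \<Longrightarrow> i < dim N m \<Longrightarrow> finite {x \<in> Xset N k m i. x \<le> M}"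
proof (induction m arbitrary: i M)
  case 0
  have "{x \<in> Xset N k 0 i. x \<le> M} \<subseteq> {0,1}" by auto
  then show ?case by (rule finite_subset) simp
next
  case (Suc p)
  obtain z where z: "M < act N z" using act_unb by blast
  define d where "d = dim N p"
  define Z where "Z = z - bias N (Suc p) i"
  define a where "a j = A N (Suc p) i j" for j
  define b where "b c j = B N (Suc p) c i j" for c j
  define kk where "kk = k (Suc p)"
  define FA where "FA j = {a j * x | x. x \<in> Xset N k p j \<and> a j * x < Z}" for j
  define FB where "FB c j = {b c j * maxsum kk S | S. set_mset S \<subseteq> Xset N k p j \<and> b c j * maxsum kk S < Z}" for c j
  have lr: "Suc p \<in> {1..L}" using Suc.prems by simp
  have IH: "\<forall>M. finite {x \<in> Xset N k p j. x \<le> M}" if "j < d" for j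
    using Suc.IH Suc.prems that by (simp add: d_def)
  have finA: "finite (FA j)" if j: "j < d" for j
  proof (cases "a j = 0")
    case True
    then have "FA j \<subseteq> {0}" by (auto simp: FA_def)
    then show ?thesis by (rule finite_subset) simp
  next
    case False
    then have ap: "0 < a j" using A_nn[OF lr Suc.prems(2)] j by (simp add: a_def d_def less_le)
    have "FA j \<subseteq> (\<lambda>x. a j * x) ` {x \<in> Xset N k p j. x \<le> Z / a j}"
    proof
      fix v assume "v \<in> FA j"
      then obtain x where x: "v = a j * x" "x \<in> Xset N k p j" "a j * x < Z" by (auto simp: FA_def)
      have "x \<le> Z / a j" using x(3) ap by (simp add: pos_le_divide_eq mult.commute)
      then show "v \<in> (\<lambda>x. a j * x) ` {x \<in> Xset N k p j. x \<le> Z / a j}" using x by blast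
    qed
    then show ?thesis using IH[OF j] finite_surj by blast
  qed
  have finB: "finite (FB c j)" if j: "j < d" for c j
  proof (cases "b c j = 0")
    case True
    then have "FB c j \<subseteq> {0}" by (auto simp: FB_def)
    then show ?thesis by (rule finite_subset) simp
  next
    case False
    then have bp: "0 < b c j" using B_nn[OF lr Suc.prems(2)] j by (simp add: b_def d_def less_le)
    have "FB c j \<subseteq> (\<lambda>v. b c j * v) ` {maxsum kk S | S. set_mset S \<subseteq> Xset N k p j \<and> maxsum kk S < Z / b c j}"
    proof
      fix v assume "v \<in> FB c j"
      then obtain S where S: "v = b c j * maxsum kk S" "set_mset S \<subseteq> Xset N k p j" "b c j * maxsum kk S < Z"
        by (auto simp: FB_def)
      have "maxsum kk S < Z / b c j" using S(3) bp by (simp add: pos_less_divide_eq mult.commute)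
      then show "v \<in> (\<lambda>v. b c j * v) ` {maxsum kk S | S. set_mset S \<subseteq> Xset N k p j \<and> maxsum kk S < Z / b c j}"
        using S by blast
    qed
    moreover have "finite {maxsum kk S | S. set_mset S \<subseteq> Xset N k p j \<and> maxsum kk S < Z / b c j}"
      by (rule fin_ms) (use IH[OF j] Xset_nn in auto)
    ultimately show ?thesis using finite_surj by blast
  qed
  define S1 where "S1 = {\<Sum>j\<in>{..<d}. f j | f. \<forall>j\<in>{..<d}. f j \<in> FA j}"
  define G where "G c = {\<Sum>j\<in>{..<d}. h j | h. \<forall>j\<in>{..<d}. h j \<in> FB c j}" for c
  define S2 where "S2 = {\<Sum>c\<in>UNIV. g c | g. \<forall>c\<in>UNIV. g c \<in> G c}"
  have fS1: "finite S1" unfolding S1_def by (rule fin_sums) (use finA in auto)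
  have fG: "finite (G c)" for c unfolding G_def by (rule fin_sums) (use finB in auto)
  have fS2: "finite S2" unfolding S2_def by (rule fin_sums) (use fG in auto)
  have "{x \<in> Xset N k (Suc p) i. x \<le> M} \<subseteq> act N ` ((\<lambda>(s1, s2). s1 + s2 + bias N (Suc p) i) ` (S1 \<times> S2))"
  proof
    fix x assume "x \<in> {x \<in> Xset N k (Suc p) i. x \<le> M}"
    then obtain xv Y where xY: "x = act N (Val N k (Suc p) i xv Y)" "\<forall>j<dim N p. xv j \<in> Xset N k p j"
      "\<forall>c y j. y \<in># Y c \<and> j < dim N p \<longrightarrow> y j \<in> Xset N k p j" and xM: "x \<le> M" by auto
    have Vz: "Val N k (Suc p) i xv Y < z"
    proof (rule ccontr)
      assume "\<not> ?thesis"
      then have "act N z \<le> x" using xY(1) act_mono by simp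
      then show False using z xM by simp
    qed
    define ta where "ta j = a j * xv j" for j
    define tb where "tb c j = b c j * maxsum kk (image_mset (\<lambda>y. y j) (Y c))" for c j
    define sb where "sb c = (\<Sum>j\<in>{..<d}. tb c j)" for c
    have ta0: "0 \<le> ta j" if "j < d" for j
    proof -
      have "0 \<le> xv j" using Xset_nn[of "xv j" p j] xY(2) that by (simp add: d_def)
      then show ?thesis using A_nn[OF lr Suc.prems(2), of j] that by (simp add: ta_def a_def d_def)
    qed
    have tb0: "0 \<le> tb c j" if "j < d" for c j
    proof -
      have "\<forall>y\<in>#image_mset (\<lambda>y. y j) (Y c). 0 \<le> y" using xY(3) that Xset_nn by (auto simp: d_def) blast
      then show ?thesis using B_nn[OF lr Suc.prems(2), of j c] that ms_nonneg by (simp add: tb_def b_def d_def)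
    qed
    have sb0: "0 \<le> sb c" for c unfolding sb_def by (rule sum_nonneg) (use tb0 in auto)
    have Vs: "Val N k (Suc p) i xv Y = (\<Sum>j\<in>{..<d}. ta j) + (\<Sum>c\<in>UNIV. sb c) + bias N (Suc p) i"
      by (simp add: Val_def ta_def sb_def tb_def a_def b_def d_def kk_def)
    have SA0: "0 \<le> (\<Sum>j\<in>{..<d}. ta j)" by (rule sum_nonneg) (use ta0 in auto)
    have SB0: "0 \<le> (\<Sum>c\<in>UNIV. sb c)" by (rule sum_nonneg) (use sb0 in auto)
    have lt: "(\<Sum>j\<in>{..<d}. ta j) + (\<Sum>c\<in>UNIV. sb c) < Z" using Vz Vs by (simp add: Z_def)
    have "ta j \<in> FA j" if j: "j < d" for j
    proof -
      have "ta j \<le> (\<Sum>j\<in>{..<d}. ta j)" by (rule member_le_sum) (use ta0 j in auto)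
      then have "ta j < Z" using lt SB0 by simp
      then show ?thesis using xY(2) j by (auto simp: FA_def ta_def d_def)
    qed
    then have in1: "(\<Sum>j\<in>{..<d}. ta j) \<in> S1" unfolding S1_def by blast
    have "tb c j \<in> FB c j" if j: "j < d" for c j
    proof -
      have "tb c j \<le> sb c" unfolding sb_def by (rule member_le_sum) (use tb0 j in auto)
      also have "sb c \<le> (\<Sum>c\<in>UNIV. sb c)" by (rule member_le_sum) (use sb0 in auto)
      finally have "tb c j < Z" using lt SA0 by simp
      moreover have "set_mset (image_mset (\<lambda>y. y j) (Y c)) \<subseteq> Xset N k p j" using xY(3) j by (auto simp: d_def)
      ultimately show ?thesis unfolding FB_def tb_def by blast
    qed
    then have "sb c \<in> G c" for c unfolding G_def sb_def by blast
    then have in2: "(\<Sum>c\<in>UNIV. sb c) \<in> S2" unfolding S2_def by blast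
    show "x \<in> act N ` ((\<lambda>(s1, s2). s1 + s2 + bias N (Suc p) i) ` (S1 \<times> S2))"
      using in1 in2 xY(1) Vs by force
  qed
  moreover have "finite (act N ` ((\<lambda>(s1, s2). s1 + s2 + bias N (Suc p) i) ` (S1 \<times> S2)))"
    using fS1 fS2 by simp
  ultimately show ?case by (rule finite_subset)
qed

end


lemma alpha_none_mono:
  "alpha_step N k t m = None \<Longrightarrow> m \<le> m' \<Longrightarrow> alpha_step N k t m' = None"
proof (induction m')
  case 0 then show ?case by simp
next
  case (Suc m') then show ?case by (cases "m = Suc m'") (auto simp: le_Suc_eq)
qed

lemma sum2_le:
  fixes f :: "'c::finite \<Rightarrow> nat \<Rightarrow> real"
  assumes "\<forall>c j. j < d \<longrightarrow> 0 \<le> f c j" "j < d"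
  shows "f c j \<le> (\<Sum>c\<in>UNIV. \<Sum>j<d. f c j)"
proof -
  have "f c j \<le> (\<Sum>j<d. f c j)" by (rule member_le_sum) (use assms in auto)
  also have "\<dots> \<le> (\<Sum>c\<in>UNIV. \<Sum>j<d. f c j)"
    by (rule member_le_sum) (use assms in \<open>auto intro: sum_nonneg\<close>)
  finally show ?thesis .
qed

context ctx begin

lemma weights_fin: "finite (weights N l)"
proof -
  have "{A N l i j | i j. i < dim N l \<and> j < dim N (l - 1)} \<subseteq> (\<lambda>(i, j). A N l i j) ` ({..<dim N l} \<times> {..<dim N (l - 1)})"
    by auto
  moreover have "{B N l c i j | c i j. i < dim N l \<and> j < dim N (l - 1)} \<subseteq>
      (\<lambda>(c, i, j). B N l c i j) ` (UNIV \<times> {..<dim N l} \<times> {..<dim N (l - 1)})"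
    by (force simp: image_iff)
  ultimately show ?thesis unfolding weights_def by (meson finite_SigmaI finite_Un finite_imageI finite_lessThan finite_class.finite_UNIV finite_subset)
qed

lemma xs_fin: "l \<in> {1..layers N} \<Longrightarrow> finite {x \<in> xs_set N k l. x \<le> M}"
proof -
  assume l: "l \<in> {1..layers N}"
  have "{x \<in> xs_set N k l. x \<le> M} = (\<Union>i<dim N (l - 1). {x \<in> Xset N k (l - 1) i. x \<le> M})"
    by (auto simp: xs_set_def)
  moreover have "finite {x \<in> Xset N k (l - 1) i. x \<le> M}" if "i < dim N (l - 1)" for i
  proof -
    have "l - 1 \<le> layers N" using l by (meson atLeastAtMost_iff diff_le_self le_trans)
    then show ?thesis using Xset_fin that by blast
  qed
  ultimately show ?thesis by simp
qed

lemma beta_prop: "a \<le> act N (real (beta N a))"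
proof -
  obtain y where y: "a < act N y" using act_unb by blast
  have "act N y \<le> act N (real (nat \<lceil>y\<rceil>))" by (rule act_mono) linarith
  then have "a \<le> act N (real (nat \<lceil>y\<rceil>))" using y by linarith
  then have "\<exists>n. a \<le> act N (real n)" by blast
  then show ?thesis unfolding beta_def by (rule LeastI_ex)
qed

end


context ctx begin

lemma stopped_case:
  assumes G: "labels01 G" and p: "Suc p \<le> layers N"
    and nok: "\<not> cap_ok N k (Suc p)"
    and caps: "\<forall>l'. 1 \<le> l' \<and> l' \<le> Suc p \<longrightarrow> cap N k t l' = 0"
  shows "run N' G (Suc p) u i = run N G (Suc p) u i"
proof (cases "i < dim N (Suc p)")
  case False then show ?thesis by simp
next
  case True
  have lr: "Suc p \<in> {1..layers N}" using p by simp
  have ag: "agg N (Suc p) = maxsum (k (Suc p))" using agg_N lr by simp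
  have c0: "cap N k t (Suc p) = 0" using caps by simp
  have "\<not> has_lnz (weights N (Suc p)) \<or> \<not> has_lnz (xs_set N k (Suc p))"
    using nok by (simp add: cap_ok_def)
  then show ?thesis
  proof
    assume "\<not> has_lnz (weights N (Suc p))"
    then have "weights N (Suc p) - {0} = {}" using has_lnz_finite weights_fin by blast
    moreover have "A N (Suc p) i j \<in> weights N (Suc p)" "B N (Suc p) c i j \<in> weights N (Suc p)"
      if "j < dim N p" for j c
      unfolding weights_def using True that by (simp, blast)+
    ultimately have A0: "A N (Suc p) i j = 0" and B0: "B N (Suc p) c i j = 0" if "j < dim N p" for j c
      using that by blast+
    show ?thesis using True by (simp add: A0 B0)
  next
    assume "\<not> has_lnz (xs_set N k (Suc p))"
    then have "xs_set N k (Suc p) - {0} = {}" using has_lnz_disc xs_fin[OF lr] by blast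
    then have X0: "x = 0" if "x \<in> Xset N k p j" "j < dim N p" for x j
      using that unfolding xs_set_def by auto
    have r0: "run N G p v j = 0" if "j < dim N p" for v j
      using X0[OF run_X[OF G _ that] that] p by simp
    have r0': "run N' G p v j = 0" if "j < dim N p" for v j
      using X0[OF run'_X[OF G _ _ that] that] p caps by simp
    have m0: "maxsum kk (image_mset (\<lambda>u'. run N G p u' j) S) = 0" if "j < dim N p" for kk S j
      by (rule ms_allzero) (use r0 that in auto)
    have sA: "(\<Sum>j<dim N p. A N (Suc p) i j * run N' G p u j) = (\<Sum>j<dim N p. A N (Suc p) i j * run N G p u j)"
      by (rule sum.cong) (simp_all add: r0 r0')
    have sB: "(\<Sum>c\<in>UNIV. \<Sum>j<dim N p. B N (Suc p) c i j * maxsum (k (Suc p))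
        (image_mset (\<lambda>u'. run N G p u' j) (mset_set {u'. (u, u') \<in> edges G c}))) = 0"
      by (intro sum.neutral ballI) (simp add: m0)
    show ?thesis using True by (simp add: sA sB ag c0 ms_zero_k)
  qed
qed

end


context ctx begin

lemma main_step:
  assumes G: "labels01 G" and p: "Suc p \<le> layers N" and ok: "cap_ok N k (Suc p)"
    and C: "cap N k t (Suc p) = min (k (Suc p)) (enat (nat \<lceil>(real (beta N a) - bmin N (Suc p))
              / (lnz (weights N (Suc p)) * lnz (xs_set N k (Suc p)))\<rceil>))"
    and al: "al = (real (beta N a) - bmin N (Suc p)) / lnz (weights N (Suc p))"
    and IH: "\<forall>u j. run N' G p u j = run N G p u j \<or> (al \<le> run N' G p u j \<and> al \<le> run N G p u j)"
  shows "run N' G (Suc p) u i = run N G (Suc p) u i \<or> (a \<le> run N' G (Suc p) u i \<and> a \<le> run N G (Suc p) u i)"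
proof (cases "i < dim N (Suc p)")
  case False then show ?thesis by simp
next
  case True
  have lr: "Suc p \<in> {1..layers N}" using p by simp
  define d where "d = dim N p"
  define nb where "nb c = {u'. (u, u') \<in> edges G c}" for c
  define ys where "ys c j = image_mset (\<lambda>u'. run N G p u' j) (mset_set (nb c))" for c j
  define ys' where "ys' c j = image_mset (\<lambda>u'. run N' G p u' j) (mset_set (nb c))" for c j
  define kk where "kk = k (Suc p)"
  define CC where "CC = cap N k t (Suc p)"
  define w where "w = lnz (weights N (Suc p))"
  define x0 where "x0 = lnz (xs_set N k (Suc p))"
  define \<beta> where "\<beta> = real (beta N a)"
  define bm where "bm = bmin N (Suc p)"
  define r where "r = (\<beta> - bm) / (w * x0)"
  define n0 where "n0 = nat \<lceil>r\<rceil>"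
  have CC: "CC = min kk (enat n0)" using C by (simp add: CC_def kk_def n0_def r_def \<beta>_def bm_def w_def x0_def)
  have al': "al = (\<beta> - bm) / w" using al by (simp add: \<beta>_def bm_def w_def)
  define a1 where "a1 j = A N (Suc p) i j" for j
  define b1 where "b1 c j = B N (Suc p) c i j" for c j
  define arg where "arg = (\<Sum>j<d. a1 j * run N G p u j) + (\<Sum>c\<in>UNIV. \<Sum>j<d. b1 c j * maxsum kk (ys c j)) + bias N (Suc p) i"
  define arg' where "arg' = (\<Sum>j<d. a1 j * run N' G p u j) + (\<Sum>c\<in>UNIV. \<Sum>j<d. b1 c j * maxsum CC (ys' c j)) + bias N (Suc p) i"
  have ag: "agg N (Suc p) = maxsum (k (Suc p))" using agg_N lr by simp
  have rN: "run N G (Suc p) u i = act N arg"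
    using True by (simp add: arg_def ys_def nb_def ag d_def kk_def a1_def b1_def)
  have rN': "run N' G (Suc p) u i = act N arg'"
    using True by (simp add: arg'_def ys'_def nb_def CC_def d_def a1_def b1_def)
  have wl: "lnz (weights N (Suc p)) \<in> weights N (Suc p) - {0}" "\<forall>y\<in>weights N (Suc p) - {0}. lnz (weights N (Suc p)) \<le> y"
    using lnz_prop ok by (auto simp: cap_ok_def)
  have xl: "lnz (xs_set N k (Suc p)) \<in> xs_set N k (Suc p) - {0}" "\<forall>y\<in>xs_set N k (Suc p) - {0}. lnz (xs_set N k (Suc p)) \<le> y"
    using lnz_prop ok by (auto simp: cap_ok_def)
  have a1nn: "0 \<le> a1 j" if "j < d" for j using A_nn[OF lr True] that by (simp add: a1_def d_def)
  have b1nn: "0 \<le> b1 c j" if "j < d" for c j using B_nn[OF lr True] that by (simp add: b1_def d_def)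
  have w0: "0 < w"
  proof -
    have "w \<in> weights N (Suc p)" "w \<noteq> 0" using wl(1) by (auto simp: w_def)
    moreover have "0 \<le> y" if "y \<in> weights N (Suc p)" for y
      using that A_nn[OF lr] B_nn[OF lr] unfolding weights_def by auto
    ultimately show ?thesis by force
  qed
  have wa: "w \<le> a1 j" if "j < d" "a1 j \<noteq> 0" for j
  proof -
    have "a1 j \<in> weights N (Suc p)" unfolding weights_def a1_def using True that(1) by (simp add: d_def, blast)
    then show ?thesis using wl(2) that(2) by (simp add: w_def)
  qed
  have wb: "w \<le> b1 c j" if "j < d" "b1 c j \<noteq> 0" for c j
  proof -
    have "b1 c j \<in> weights N (Suc p)" unfolding weights_def b1_def using True that(1) by (simp add: d_def, blast)
    then show ?thesis using wl(2) that(2) by (simp add: w_def)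
  qed
  have x00: "0 < x0"
  proof -
    have "x0 \<in> xs_set N k (Suc p)" "x0 \<noteq> 0" using xl(1) by (auto simp: x0_def)
    then show ?thesis using Xset_nn unfolding xs_set_def by force
  qed
  have x0y: "x0 \<le> y" if yy: "j < d" "y \<in># ys c j" "y \<noteq> 0" for c j y
  proof -
    obtain v where "y = run N G p v j" using yy(2) by (auto simp: ys_def)
    then have "y \<in> Xset N k p j" using run_X[OF G, of p j v] p yy(1) by (simp add: d_def)
    then have "y \<in> xs_set N k (Suc p) - {0}" using yy by (auto simp: xs_set_def d_def)
    then show ?thesis using xl(2) by (simp add: x0_def)
  qed
  have bm_le: "bm \<le> bias N (Suc p) i"
  proof -
    have "finite {bias N (Suc p) i | i. i < dim N (Suc p)}" by simp
    then show ?thesis unfolding bm_def bmin_def using True by (intro Min_le) auto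
  qed
  have act'nn: "\<forall>x. 0 \<le> act N' x" by (simp add: act_nn)
  have rn: "0 \<le> run N G p v j" for v j using run_nn[of N G] act_nn G by blast
  have rn': "0 \<le> run N' G p v j" for v j using run_nn[OF act'nn G] .
  have ysnn: "\<forall>y\<in>#ys c j. 0 \<le> y" for c j using rn by (auto simp: ys_def)
  have ysnn': "\<forall>y\<in>#ys' c j. 0 \<le> y" for c j using rn' by (auto simp: ys'_def)
  define SA where "SA = (\<Sum>j<d. a1 j * run N G p u j)"
  define SA' where "SA' = (\<Sum>j<d. a1 j * run N' G p u j)"
  define SB where "SB = (\<Sum>c\<in>UNIV. \<Sum>j<d. b1 c j * maxsum kk (ys c j))"
  define SB' where "SB' = (\<Sum>c\<in>UNIV. \<Sum>j<d. b1 c j * maxsum CC (ys' c j))"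
  have argS: "arg = SA + SB + bias N (Suc p) i" "arg' = SA' + SB' + bias N (Suc p) i"
    by (simp_all add: arg_def arg'_def SA_def SA'_def SB_def SB'_def)
  have tA: "\<forall>j. j < d \<longrightarrow> 0 \<le> a1 j * run N G p u j" using a1nn rn by simp
  have tA': "\<forall>j. j < d \<longrightarrow> 0 \<le> a1 j * run N' G p u j" using a1nn rn' by simp
  have tB: "\<forall>c j. j < d \<longrightarrow> 0 \<le> b1 c j * maxsum kk (ys c j)" using b1nn ms_nonneg[OF ysnn] by simp
  have tB': "\<forall>c j. j < d \<longrightarrow> 0 \<le> b1 c j * maxsum CC (ys' c j)" using b1nn ms_nonneg[OF ysnn'] by simp
  have SA0: "0 \<le> SA" unfolding SA_def by (rule sum_nonneg) (use tA in auto)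
  have SA0': "0 \<le> SA'" unfolding SA'_def by (rule sum_nonneg) (use tA' in auto)
  have SB0: "0 \<le> SB" unfolding SB_def by (intro sum_nonneg) (use tB in auto)
  have SB0': "0 \<le> SB'" unfolding SB'_def by (intro sum_nonneg) (use tB' in auto)
  have lA: "a1 j * run N G p u j \<le> SA" if "j < d" for j unfolding SA_def by (rule member_le_sum) (use tA that in auto)
  have lA': "a1 j * run N' G p u j \<le> SA'" if "j < d" for j unfolding SA'_def by (rule member_le_sum) (use tA' that in auto)
  have lB: "b1 c j * maxsum kk (ys c j) \<le> SB" if "j < d" for c j unfolding SB_def by (rule sum2_le) (use tB that in auto)
  have lB': "b1 c j * maxsum CC (ys' c j) \<le> SB'" if "j < d" for c j unfolding SB'_def by (rule sum2_le) (use tB' that in auto)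
  have key: "arg' = arg \<or> (\<beta> \<le> arg \<and> \<beta> \<le> arg')"
  proof (cases "\<beta> \<le> bm")
    case True then show ?thesis using argS SA0 SA0' SB0 SB0' bm_le by auto
  next
    case False
    then have al0: "0 < al" using al' w0 by simp
    have wal: "w * al = \<beta> - bm" using al' w0 by simp
    show ?thesis
    proof (cases "\<exists>j<d. a1 j \<noteq> 0 \<and> run N' G p u j \<noteq> run N G p u j")
      case True
      then obtain j where j: "j < d" "a1 j \<noteq> 0" "run N' G p u j \<noteq> run N G p u j" by blast
      have ge: "al \<le> run N' G p u j" "al \<le> run N G p u j" using IH j(3) by blast+
      have "w * al \<le> a1 j * run N G p u j" by (rule mult_mono) (use wa[OF j(1,2)] ge a1nn[OF j(1)] al0 in auto)
      moreover have "w * al \<le> a1 j * run N' G p u j" by (rule mult_mono) (use wa[OF j(1,2)] ge a1nn[OF j(1)] al0 in auto)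
      ultimately show ?thesis using lA[OF j(1)] lA'[OF j(1)] argS SB0 SB0' bm_le wal by auto
    next
      case nA: False
      have n0pos: "0 < n0"
      proof -
        have "0 < r" using False w0 x00 by (simp add: r_def)
        then show ?thesis by (simp add: n0_def)
      qed
      show ?thesis
      proof (cases "\<exists>c j u'. j < d \<and> b1 c j \<noteq> 0 \<and> kk \<noteq> 0 \<and> u' \<in># mset_set (nb c) \<and> run N' G p u' j \<noteq> run N G p u' j")
        case True
        then obtain c j u' where cj: "j < d" "b1 c j \<noteq> 0" "kk \<noteq> 0" "u' \<in># mset_set (nb c)" "run N' G p u' j \<noteq> run N G p u' j" by blast
        have ge: "al \<le> run N' G p u' j" "al \<le> run N G p u' j" using IH cj(5) by blast+
        have CC0: "CC \<noteq> 0" using CC cj(3) n0pos by (auto simp: min_def zero_enat_def)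
        have m1: "run N G p u' j \<le> maxsum kk (ys c j)"
          by (rule ms_ge_elem[OF ysnn cj(3)]) (use cj(4) in \<open>auto simp: ys_def\<close>)
        have m2: "run N' G p u' j \<le> maxsum CC (ys' c j)"
          by (rule ms_ge_elem[OF ysnn' CC0]) (use cj(4) in \<open>auto simp: ys'_def\<close>)
        have "w * al \<le> b1 c j * maxsum kk (ys c j)" by (rule mult_mono) (use wb[OF cj(1,2)] ge m1 b1nn[OF cj(1)] al0 in auto)
        moreover have "w * al \<le> b1 c j * maxsum CC (ys' c j)" by (rule mult_mono) (use wb[OF cj(1,2)] ge m2 b1nn[OF cj(1)] al0 in auto)
        ultimately show ?thesis using lB[of j c, OF cj(1)] lB'[of j c, OF cj(1)] argS SA0 SA0' bm_le wal by auto
      next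
        case nB: False
        show ?thesis
        proof (cases "\<exists>c j. j < d \<and> b1 c j \<noteq> 0 \<and> kk \<noteq> 0 \<and> ys' c j = ys c j \<and> maxsum CC (ys' c j) \<noteq> maxsum kk (ys c j)")
          case True
          then obtain c j where cj: "j < d" "b1 c j \<noteq> 0" "kk \<noteq> 0" "ys' c j = ys c j" "maxsum CC (ys' c j) \<noteq> maxsum kk (ys c j)" by blast
          have CCk: "CC = enat n0" "enat n0 \<le> kk"
            using CC cj(4,5) by (auto simp: min_def split: if_splits)
          have cnt: "n0 \<le> size (filter_mset (\<lambda>y. y \<noteq> 0) (ys c j))"
          proof (rule ccontr)
            assume "\<not> ?thesis"
            then have "maxsum (enat n0) (ys c j) = maxsum kk (ys c j)"
              using ms_count_lt[OF ysnn _ CCk(2)] by (simp add: not_le)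
            then show False using cj(4,5) CCk(1) by simp
          qed
          have mge: "real n0 * x0 \<le> maxsum (enat n0) (ys c j)"
            by (rule ms_count_ge[OF ysnn cnt]) (use x0y[OF cj(1)] in blast)
          have "r \<le> real n0"
          proof -
            have "0 < r" using False w0 x00 by (simp add: r_def)
            then show ?thesis unfolding n0_def by linarith
          qed
          then have "r * x0 \<le> real n0 * x0" using x00 by simp
          moreover have "r * x0 * w = \<beta> - bm" using w0 x00 by (simp add: r_def)
          ultimately have M'ge: "\<beta> - bm \<le> w * maxsum CC (ys' c j)" using mge cj(4) CCk(1) w0
            by (metis (no_types, lifting) dual_order.trans mult.commute mult_le_cancel_left_pos)
          have "maxsum CC (ys c j) \<le> maxsum kk (ys c j)" by (rule ms_mono[OF ysnn]) (simp add: CC)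
          then have Mge: "\<beta> - bm \<le> w * maxsum kk (ys c j)" using M'ge cj(4) w0 by (smt (verit) mult_left_mono)
          have "w * maxsum CC (ys' c j) \<le> b1 c j * maxsum CC (ys' c j)"
            by (rule mult_right_mono) (use wb[OF cj(1,2)] ms_nonneg[OF ysnn'] in auto)
          moreover have "w * maxsum kk (ys c j) \<le> b1 c j * maxsum kk (ys c j)"
            by (rule mult_right_mono) (use wb[OF cj(1,2)] ms_nonneg[OF ysnn] in auto)
          ultimately show ?thesis using lB[of j c, OF cj(1)] lB'[of j c, OF cj(1)] argS SA0 SA0' bm_le M'ge Mge by auto
        next
          case nC: False
          have eA: "SA' = SA" unfolding SA_def SA'_def by (rule sum.cong) (use nA in auto)
          have eB: "b1 c j * maxsum CC (ys' c j) = b1 c j * maxsum kk (ys c j)" if "j < d" for c j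
          proof (cases "b1 c j = 0")
            case True then show ?thesis by simp
          next
            case b: False
            show ?thesis
            proof (cases "kk = 0")
              case True then have "CC = 0" using CC by simp
              then show ?thesis using True by (simp add: ms_zero_k)
            next
              case False
              have "ys' c j = ys c j" unfolding ys_def ys'_def
                by (rule image_mset_cong) (use nB that b False in blast)
              then show ?thesis using nC that b False by auto
            qed
          qed
          have "SB' = SB" unfolding SB_def SB'_def by (intro sum.cong refl) (use eB in auto)
          then show ?thesis using eA argS by simp
        qed
      qed
    qed
  qed
  have "a \<le> act N \<beta>" using beta_prop by (simp add: \<beta>_def)
  then show ?thesis using key rN rN' act_mono by (metis order_trans)
qed

end


context ctx begin

lemma inv:
  assumes G: "labels01 G"
  shows "l \<le> layers N \<Longrightarrow> alpha_step N k t (layers N - l) = Some a \<Longrightarrow>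
    \<forall>u j. run N' G l u j = run N G l u j \<or> (a \<le> run N' G l u j \<and> a \<le> run N G l u j)"
proof (induction l arbitrary: a)
  case 0 then show ?case by simp
next
  case (Suc p)
  define m where "m = layers N - Suc p"
  have Lp: "layers N - p = Suc m" using Suc.prems(1) by (simp add: m_def)
  have Lm: "layers N - m = Suc p" using Suc.prems(1) by (simp add: m_def)
  have am: "alpha_step N k t m = Some a" using Suc.prems(2) by (simp add: m_def)
  show ?case
  proof (cases "cap_ok N k (Suc p)")
    case True
    define al where "al = (real (beta N a) - bmin N (Suc p)) / lnz (weights N (Suc p))"
    have "alpha_step N k t (layers N - p) = Some al"
      unfolding Lp using am Lm True by (simp add: al_def)
    then have IH: "\<forall>u j. run N' G p u j = run N G p u j \<or> (al \<le> run N' G p u j \<and> al \<le> run N G p u j)"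
      using Suc.IH Suc.prems(1) by simp
    have C: "cap N k t (Suc p) = min (k (Suc p)) (enat (nat \<lceil>(real (beta N a) - bmin N (Suc p))
              / (lnz (weights N (Suc p)) * lnz (xs_set N k (Suc p)))\<rceil>))"
      using Suc.prems(2) True by (simp add: cap_def)
    show ?thesis using main_step[OF G Suc.prems(1) True C al_def IH] by blast
  next
    case False
    have an: "alpha_step N k t (layers N - p) = None"
      unfolding Lp using am Lm False by simp
    have caps: "\<forall>l'. 1 \<le> l' \<and> l' \<le> Suc p \<longrightarrow> cap N k t l' = 0"
    proof (intro allI impI)
      fix l' assume l': "1 \<le> l' \<and> l' \<le> Suc p"
      show "cap N k t l' = 0"
      proof (cases "l' = Suc p")
        case True then show ?thesis using Suc.prems(2) False by (simp add: cap_def)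
      next
        case False
        then have "l' \<le> p" using l' by simp
        then have "layers N - p \<le> layers N - l'" by (rule diff_le_mono2)
        then have "alpha_step N k t (layers N - l') = None" using alpha_none_mono an by blast
        then show ?thesis by (simp add: cap_def)
      qed
    qed
    show ?thesis using stopped_case[OF G Suc.prems(1) False caps] by simp
  qed
qed

end

theorem theorem2:
  fixes N :: "('c::finite) gnn" and \<delta> :: nat and k :: "nat \<Rightarrow> enat" and t :: real
    and D :: "('c, 'a) fact set"
  assumes "monotonic_maxsum N \<delta> k t"
    and "is_dataset \<delta> D"
  shows "T N \<delta> D = T (N\<lparr>agg := (\<lambda>l. maxsum (cap N k t l))\<rparr>) \<delta> D"
proof -
  interpret ctx N \<delta> k t by standard (rule assms(1))
  let ?G = "enc \<delta> D :: ('c, 'a) graph"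
  have G: "labels01 ?G" by (simp add: labels01_def enc_def)
  have I: "\<forall>u j. run N' ?G (layers N) u j = run N ?G (layers N) u j \<or>
      (t \<le> run N' ?G (layers N) u j \<and> t \<le> run N ?G (layers N) u j)"
  proof -
    have "alpha_step N k t (layers N - layers N) = Some t" by simp
    from inv[OF G order_refl this] show ?thesis .
  qed
  have "apply_gnn N ?G = apply_gnn N' ?G"
  proof -
    have "(\<lambda>v i. if i < dim N (layers N) \<and> cls N (run N ?G (layers N) v i) then 1 else 0) =
          (\<lambda>v i. if i < dim N (layers N) \<and> cls N (run N' ?G (layers N) v i) then 1 else (0::real))"
    proof (intro ext)
      fix v i
      have "cls N (run N ?G (layers N) v i) = cls N (run N' ?G (layers N) v i)"
        unfolding cls_iff using I[rule_format, of v i] by linarith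
      then show "(if i < dim N (layers N) \<and> cls N (run N ?G (layers N) v i) then 1 else 0) =
          (if i < dim N (layers N) \<and> cls N (run N' ?G (layers N) v i) then 1 else (0::real))" by simp
    qed
    then show ?thesis by (simp add: apply_gnn_def)
  qed
  then show ?thesis by (simp add: T_def)
qed


end
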